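(* Let $\alpha\in\mathbb N=\{1,2,\ldots\}$ and define the real-valued measure $$\mu_\alpha=(1-q^\alpha)\sum_{k=0}^\infty q^{\alpha k}\delta_{q^k/\phi}.$$ Then $\mu_\alpha$ has total mass $1$ and for every $n\ge 0$, $$\int x^n\,d\mu_\alpha(x)=\frac{F_\alpha}{F_{\alpha+n}}.$$ Moreover $\mu_\alpha$ is a positive (probability) measure when $\alpha$ is even. In particular, $(1/F_{n+2})_{n\ge 0}$ is the moment sequence of the probability measure $\mu_2=(1-q^2)\sum_{k\ge 0}q^{2k}\delta_{q^k/\phi}$.
   Context: $F_n$ denotes the Fibonacci numbers: $F_0=0$, $F_1=1$, $F_{n+1}=F_n+F_{n-1}$. $\phi=(1+\sqrt5)/2$ and $q=(1-\sqrt5)/(1+\sqrt5)=1/\phi-1$, so $-1<q<0$. $\delta_a$ denotes the unit point mass at $a$. *)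

theory Defs
  imports "HOL-Probability.Probability" "HOL-Number_Theory.Fib"
begin

definition gphi :: real where "gphi = (1 + sqrt 5) / 2"

definition qq :: real where "qq = (1 - sqrt 5) / (1 + sqrt 5)"

text \<open>The (signed) discrete measure mu_alpha = (1 - q^alpha) * sum_k q^(alpha k) delta_(q^k/phi),
  represented by its weights and atoms.\<close>
definition mu_weight :: "nat \<Rightarrow> nat \<Rightarrow> real" where
  "mu_weight \<alpha> k = (1 - qq ^ \<alpha>) * qq ^ (\<alpha> * k)"

definition mu_atom :: "nat \<Rightarrow> real" where
  "mu_atom k = qq ^ k / gphi"

text \<open>As an (ennreal-valued) measure on the reals: meaningful when all weights are nonnegative.\<close>
definition mu_measure :: "nat \<Rightarrow> real measure" where
  "mu_measure \<alpha> = distr (density (count_space UNIV) (\<lambda>k. ennreal (mu_weight \<alpha> k))) borel mu_atom"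

end

theory Submission
  imports Defs
begin

lemma sqrt5_gt1: "sqrt 5 > (1::real)"
  by (simp add: real_less_rsqrt)

lemma sqrt5_lt3: "sqrt 5 < (3::real)"
  by (simp add: real_sqrt_less_iff real_less_lsqrt)

lemma gphi_pos: "gphi > 0"
  unfolding gphi_def using sqrt5_gt1 by (simp add: add_pos_pos)

lemma qq_eq: "qq = ((1 - sqrt 5) / 2) / gphi"
proof -
  have "1 + sqrt 5 \<noteq> 0" using sqrt5_gt1 by linarith
  then show ?thesis unfolding qq_def gphi_def by (simp add: divide_simps algebra_simps)
qed

lemma abs_qq: "\<bar>qq\<bar> < 1"
proof -
  have p: "1 + sqrt 5 > 0" using sqrt5_gt1 by linarith
  have "qq < 0" unfolding qq_def by (rule divide_neg_pos[OF _ p]) (use sqrt5_gt1 in linarith)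
  moreover have "-1 < qq" unfolding qq_def using pos_less_divide_eq[OF p, of "-1" "1 - sqrt 5"] by simp
  ultimately show ?thesis by simp
qed

lemma term_eq: "mu_weight \<alpha> k * mu_atom k ^ n = ((1 - qq ^ \<alpha>) / gphi ^ n) * (qq ^ (\<alpha> + n)) ^ k"
proof -
  have "(qq ^ (\<alpha> + n)) ^ k = qq ^ (\<alpha> * k) * (qq ^ k) ^ n"
    by (simp add: power_mult[symmetric] power_add[symmetric] algebra_simps)
  then show ?thesis unfolding mu_weight_def mu_atom_def by (simp add: power_divide)
qed

lemma fib_qq: "real (fib m) = gphi ^ m * (1 - qq ^ m) / sqrt 5"
proof -
  have "real (fib m) = (gphi ^ m - ((1 - sqrt 5) / 2) ^ m) / sqrt 5"
    unfolding gphi_def by (rule fib_closed_form)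
  moreover have "((1 - sqrt 5) / 2) ^ m = qq ^ m * gphi ^ m"
    unfolding qq_eq using gphi_pos by (simp add: power_divide)
  ultimately show ?thesis by (simp add: algebra_simps)
qed

lemma moments:
  assumes "\<alpha> \<ge> 1"
  shows "(\<lambda>k. mu_weight \<alpha> k * mu_atom k ^ n) sums (real (fib \<alpha>) / real (fib (\<alpha> + n)))"
proof -
  have q1: "\<bar>qq ^ (\<alpha> + n)\<bar> < 1"
    using abs_qq assms by (simp add: power_abs power_less_one_iff)
  have ne: "1 - qq ^ (\<alpha> + n) \<noteq> 0" using q1 by auto
  have eq: "(\<lambda>k. mu_weight \<alpha> k * mu_atom k ^ n) = (\<lambda>k. ((1 - qq ^ \<alpha>) / gphi ^ n) * (qq ^ (\<alpha> + n)) ^ k)"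
    by (simp add: term_eq)
  have "(\<lambda>k. ((1 - qq ^ \<alpha>) / gphi ^ n) * (qq ^ (\<alpha> + n)) ^ k) sums
      (((1 - qq ^ \<alpha>) / gphi ^ n) * (1 / (1 - qq ^ (\<alpha> + n))))"
    by (intro sums_mult geometric_sums) (use q1 in simp)
  moreover have "((1 - qq ^ \<alpha>) / gphi ^ n) * (1 / (1 - qq ^ (\<alpha> + n))) = real (fib \<alpha>) / real (fib (\<alpha> + n))"
    unfolding fib_qq using gphi_pos ne by (simp add: field_simps power_add)
  ultimately show ?thesis unfolding eq by simp
qed

lemma weights_sum:
  assumes "\<alpha> \<ge> 1"
  shows "mu_weight \<alpha> sums 1"
proof -
  have "fib \<alpha> > 0" using assms fib_neq_0_nat by auto
  then show ?thesis using moments[OF assms, of 0] by simp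
qed

lemma weights_nonneg:
  assumes "even \<alpha>"
  shows "mu_weight \<alpha> k \<ge> 0"
proof -
  have "qq ^ \<alpha> \<ge> 0" using assms by (simp add: zero_le_even_power)
  moreover have "\<bar>qq ^ \<alpha>\<bar> \<le> 1" using abs_qq by (simp add: power_abs power_le_one)
  ultimately have "1 - qq ^ \<alpha> \<ge> 0" by simp
  moreover have "qq ^ (\<alpha> * k) \<ge> 0" using assms by (simp add: zero_le_even_power)
  ultimately show ?thesis unfolding mu_weight_def by simp
qed

lemma even_part:
  assumes "\<alpha> \<ge> 1" "even \<alpha>"
  shows "prob_space (mu_measure \<alpha>)
        \<and> (\<forall>n::nat. integrable (mu_measure \<alpha>) (\<lambda>x. x ^ n)
              \<and> (\<integral>x. x ^ n \<partial>mu_measure \<alpha>) = real (fib \<alpha>) / real (fib (\<alpha> + n)))"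
proof -
  note nn = weights_nonneg[OF assms(2)]
  have meas: "mu_atom \<in> count_space UNIV \<rightarrow>\<^sub>M borel" by simp
  let ?D = "density (count_space UNIV) (\<lambda>k. ennreal (mu_weight \<alpha> k))"
  have "emeasure (mu_measure \<alpha>) (space (mu_measure \<alpha>)) = emeasure ?D UNIV"
    unfolding mu_measure_def by (subst emeasure_distr) auto
  also have "\<dots> = (\<Sum>k. ennreal (mu_weight \<alpha> k))"
    by (simp add: emeasure_density nn_integral_count_space_nat)
  also have "\<dots> = ennreal 1"
    by (rule suminf_ennreal_eq[OF nn weights_sum[OF assms(1)]])
  finally have ps: "prob_space (mu_measure \<alpha>)" by (intro prob_spaceI) simp
  have "integrable (mu_measure \<alpha>) (\<lambda>x. x ^ n)
              \<and> (\<integral>x. x ^ n \<partial>mu_measure \<alpha>) = real (fib \<alpha>) / real (fib (\<alpha> + n))" for n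
  proof -
    have S: "(\<lambda>k. mu_weight \<alpha> k * mu_atom k ^ n) sums (real (fib \<alpha>) / real (fib (\<alpha> + n)))"
      by (rule moments[OF assms(1)])
    have sumabs: "summable (\<lambda>k. norm (mu_weight \<alpha> k * mu_atom k ^ n))"
    proof -
      have "summable (\<lambda>k. \<bar>(1 - qq ^ \<alpha>) / gphi ^ n\<bar> * \<bar>qq ^ (\<alpha> + n)\<bar> ^ k)"
        using abs_qq assms(1)
        by (intro summable_mult summable_geometric) (simp add: power_abs power_less_one_iff)
      moreover have "(\<lambda>k. norm (mu_weight \<alpha> k * mu_atom k ^ n)) = (\<lambda>k. \<bar>(1 - qq ^ \<alpha>) / gphi ^ n\<bar> * \<bar>qq ^ (\<alpha> + n)\<bar> ^ k)"
        by (simp add: term_eq abs_mult power_abs)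
      ultimately show ?thesis by simp
    qed
    have intc: "integrable (count_space UNIV) (\<lambda>k. mu_weight \<alpha> k * mu_atom k ^ n)"
      using sumabs by (simp add: integrable_count_space_nat_iff)
    have intD: "integrable ?D (\<lambda>k. mu_atom k ^ n)"
      by (subst integrable_density) (use intc nn in auto)
    have I1: "integrable (mu_measure \<alpha>) (\<lambda>x. x ^ n)"
      unfolding mu_measure_def by (subst integrable_distr_eq) (use intD in auto)
    have "(\<integral>x. x ^ n \<partial>mu_measure \<alpha>) = (\<integral>k. mu_atom k ^ n \<partial>?D)"
      unfolding mu_measure_def by (subst integral_distr) auto
    also have "\<dots> = (\<integral>k. mu_weight \<alpha> k * mu_atom k ^ n \<partial>count_space UNIV)"
      by (subst integral_density) (use nn in auto)
    also have "\<dots> = (\<Sum>k. mu_weight \<alpha> k * mu_atom k ^ n)"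
      by (rule integral_count_space_nat[OF intc])
    also have "\<dots> = real (fib \<alpha>) / real (fib (\<alpha> + n))"
      using S by (simp add: sums_iff)
    finally show ?thesis using I1 by simp
  qed
  with ps show ?thesis by blast
qed

theorem mainTheorem2:
  fixes \<alpha> :: nat
  assumes "\<alpha> \<ge> 1"
  shows "mu_weight \<alpha> sums 1
    \<and> (\<forall>n::nat. (\<lambda>k. mu_weight \<alpha> k * mu_atom k ^ n) sums (real (fib \<alpha>) / real (fib (\<alpha> + n))))
    \<and> (even \<alpha> \<longrightarrow>
        (\<forall>k. mu_weight \<alpha> k \<ge> 0) \<and> prob_space (mu_measure \<alpha>)
        \<and> (\<forall>n::nat. integrable (mu_measure \<alpha>) (\<lambda>x. x ^ n)
              \<and> (\<integral>x. x ^ n \<partial>mu_measure \<alpha>) = real (fib \<alpha>) / real (fib (\<alpha> + n))))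
    \<and> (\<forall>n::nat. (\<integral>x. x ^ n \<partial>mu_measure 2) = 1 / real (fib (n + 2)))"
proof -
  have "(\<integral>x. x ^ n \<partial>mu_measure 2) = 1 / real (fib (n + 2))" for n
    using even_part[of 2] by (simp add: add.commute)
  then show ?thesis using weights_sum[OF assms] moments[OF assms] even_part[OF assms] weights_nonneg
    by blast
qed

end
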